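(* Let $X$ be a scalar random variable with distribution $\pi$ and upper bound $\ell\in\mathbb{R}$ with $\mathbb{P}_\pi[X\le \ell]=1$. Let $g$ be a closed convex function with $g(1)=0$, let $\beta\ge 0$, and suppose the convex conjugate $g^*$ of $g$ is a real-valued function $g^*:\mathbb{R}\to\mathbb{R}$. Define $L(x,\mu,t) = t\left(\mu + g^*\left(\frac{x}{t}-\mu+\beta\right)\right)$ and suppose $u_b: D\subset\mathbb{R}^2\to\mathbb{R}$ is a function such that $\mathbb{P}_{\pi}[L(X,\mu,t)\le u_b(\mu,t)] = 1$ for all $\mu\in\mathbb{R}$, $t>0$. For $N$ independent samples $x_1,\dots,x_N$ of $X$, let $\zeta^*_N(\mu,t)$ be the solution of $\min_{\zeta\in\mathbb{R}}\zeta$ subject to $\zeta\ge L(x_i,\mu,t)$ for all $i$ (i.e. $\zeta^*_N(\mu,t)=\max_k L(x_k,\mu,t)$). Then for all $\epsilon\in[0,1]$, $\mu\in\mathbb{R}$, $t>0$, \[ \mathbb{P}^N_{\pi}\left[\mathbb{E}_{\pi}[L(X,\mu,t)] \le \zeta^*_N(\mu,t)(1-\epsilon) + u_b(\mu,t)\epsilon\right] \ge 1-(1-\epsilon)^N. \]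
   Context: $\mathbb{P}^N_{\pi}$ denotes the $N$-fold product probability measure governing the i.i.d. sample $(x_1,\dots,x_N)$. The convex conjugate is $g^*(y)=\sup_x (xy - g(x))$. *)

theory Defs
  imports "HOL-Probability.Probability"
begin

definition proper_closed_convex :: "(real \<Rightarrow> ereal) \<Rightarrow> bool" where
  "proper_closed_convex g \<longleftrightarrow>
     (\<forall>x. g x \<noteq> -\<infinity>) \<and>
     convex {p :: real \<times> real. g (fst p) \<le> ereal (snd p)} \<and>
     closed {p :: real \<times> real. g (fst p) \<le> ereal (snd p)}"

definition convex_conjugate :: "(real \<Rightarrow> ereal) \<Rightarrow> real \<Rightarrow> ereal" where
  "convex_conjugate g y = (SUP x. ereal (x * y) - g x)"

definition ereal_expectation :: "'a measure \<Rightarrow> ('a \<Rightarrow> real) \<Rightarrow> ereal" where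
  "ereal_expectation M f =
     enn2ereal (\<integral>\<^sup>+ x. ennreal (max 0 (f x)) \<partial>M) - enn2ereal (\<integral>\<^sup>+ x. ennreal (max 0 (- f x)) \<partial>M)"

end

theory Submission
  imports Defs
begin

lemma ennreal_max0: "ennreal (max 0 r) = ennreal r"
  by (simp add: max_def ennreal_neg)

lemma expect_cases:
  fixes M :: "'a measure" and f :: "'a \<Rightarrow> real"
  assumes P: "prob_space M" and fm: "f \<in> borel_measurable M"
    and ub: "AE x in M. f x \<le> u"
  shows "ereal_expectation M f = -\<infinity> \<or> (integrable M f \<and> ereal_expectation M f = ereal (integral\<^sup>L M f))"
proof -
  interpret prob_space M by fact
  have "(\<integral>\<^sup>+ x. ennreal (f x) \<partial>M) \<le> (\<integral>\<^sup>+ x. ennreal (max 0 u) \<partial>M)"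
    using ub by (intro nn_integral_mono_AE) (auto elim!: eventually_mono intro: ennreal_leI)
  also have "\<dots> = ennreal (max 0 u)" by (simp add: emeasure_space_1)
  finally have Ple: "(\<integral>\<^sup>+ x. ennreal (f x) \<partial>M) \<le> ennreal (max 0 u)" .
  have Pfin: "(\<integral>\<^sup>+ x. ennreal (f x) \<partial>M) \<noteq> \<infinity>"
    using Ple by (auto simp: top_unique)
  show ?thesis
  proof (cases "(\<integral>\<^sup>+ x. ennreal (- f x) \<partial>M) = \<infinity>")
    case True
    obtain p where p: "0 \<le> p" "(\<integral>\<^sup>+ x. ennreal (f x) \<partial>M) = ennreal p"
      using Pfin by (cases "(\<integral>\<^sup>+ x. ennreal (f x) \<partial>M)" rule: ennreal_cases) auto
    have "ereal_expectation M f = -\<infinity>"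
      unfolding ereal_expectation_def ennreal_max0 True p(2) using p(1) by (simp add: enn2ereal_ennreal)
    then show ?thesis by simp
  next
    case False
    then have int: "integrable M f" using Pfin fm by (simp add: real_integrable_def)
    obtain r q where rq: "0 \<le> r" "0 \<le> q"
      "(\<integral>\<^sup>+x. ennreal (f x)\<partial>M) = ennreal r"
      "(\<integral>\<^sup>+x. ennreal (-f x)\<partial>M) = ennreal q" "f \<in> borel_measurable M" "integral\<^sup>L M f = r - q"
      by (rule integrableE[OF int])
    have "ereal_expectation M f = ereal (integral\<^sup>L M f)"
      unfolding ereal_expectation_def ennreal_max0 rq(3,4,6) using rq(1,2) by (simp add: enn2ereal_ennreal)
    then show ?thesis using int by simp
  qed
qed

lemma conj_convex:
  assumes "proper_closed_convex g" and "\<And>y. convex_conjugate g y = ereal (gs y)"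
  shows "convex_on UNIV gs"
proof (rule convex_onI)
  fix a :: real and y1 y2 assume a: "0 < a" "a < 1"
  have up: "ereal (z * y) - g z \<le> ereal (gs y)" for z y
  proof -
    have "ereal (z * y) - g z \<le> convex_conjugate g y"
      unfolding convex_conjugate_def by (rule SUP_upper) simp
    then show ?thesis using assms(2)[of y] by simp
  qed
  have "convex_conjugate g ((1 - a) *\<^sub>R y1 + a *\<^sub>R y2) \<le> ereal ((1 - a) * gs y1 + a * gs y2)"
    unfolding convex_conjugate_def
  proof (rule SUP_least)
    fix z
    show "ereal (z * ((1 - a) *\<^sub>R y1 + a *\<^sub>R y2)) - g z \<le> ereal ((1 - a) * gs y1 + a * gs y2)"
    proof (cases "g z")
      case (real r)
      have "z * y1 - r \<le> gs y1" "z * y2 - r \<le> gs y2" using up[of z y1] up[of z y2] real by auto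
      then have "(1-a)*(z * y1 - r) + a*(z*y2 - r) \<le> (1 - a) * gs y1 + a * gs y2"
        using a by (intro add_mono mult_left_mono) auto
      moreover have "z * ((1 - a) *\<^sub>R y1 + a *\<^sub>R y2) - r = (1-a)*(z * y1 - r) + a*(z*y2 - r)"
        by (simp add: algebra_simps)
      ultimately show ?thesis using real by simp
    next
      case PInf then show ?thesis by simp
    next
      case MInf then show ?thesis using assms(1) unfolding proper_closed_convex_def by blast
    qed
  qed
  then show "gs ((1 - a) *\<^sub>R y1 + a *\<^sub>R y2) \<le> (1 - a) * gs y1 + a * gs y2"
    using assms(2)[of "(1 - a) *\<^sub>R y1 + a *\<^sub>R y2"] by (simp only: ereal_less_eq(3))
qed (rule convex_UNIV)

theorem lemma1:
  fixes \<pi> :: "real measure" and l :: real and g :: "real \<Rightarrow> ereal"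
    and gs :: "real \<Rightarrow> real" and \<beta> :: real and ub :: "real \<Rightarrow> real \<Rightarrow> real"
    and L :: "real \<Rightarrow> real \<Rightarrow> real \<Rightarrow> real" and N :: nat
    and \<epsilon> \<mu> t :: real
  assumes "prob_space \<pi>" and "sets \<pi> = sets borel"
    and "AE x in \<pi>. x \<le> l"
    and "proper_closed_convex g" and "g 1 = 0" and "\<beta> \<ge> 0"
    and "\<And>y. convex_conjugate g y = ereal (gs y)"
    and "\<And>x m s. L x m s = s * (m + gs (x / s - m + \<beta>))"
    and "\<And>m s. s > 0 \<Longrightarrow> AE x in \<pi>. L x m s \<le> ub m s"
    and "0 \<le> \<epsilon>" and "\<epsilon> \<le> 1" and "t > 0"
  shows "measure (PiM {..<N} (\<lambda>_. \<pi>))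
           {xs \<in> space (PiM {..<N} (\<lambda>_. \<pi>)).
              ereal_expectation \<pi> (\<lambda>x. L x \<mu> t)
                \<le> ereal (Max ((\<lambda>k. L (xs k) \<mu> t) ` {..<N}) * (1 - \<epsilon>) + ub \<mu> t * \<epsilon>)}
         \<ge> 1 - (1 - \<epsilon>) ^ N"
proof -
  interpret prob_space \<pi> by fact
  define Lf where "Lf = (\<lambda>x. L x \<mu> t)"
  define u where "u = ub \<mu> t"
  define E where "E = ereal_expectation \<pi> Lf"
  let ?P = "PiM {..<N} (\<lambda>_. \<pi>)"
  interpret P: prob_space ?P by (rule prob_space_PiM) (rule assms(1))
  have spi: "space \<pi> = UNIV" using sets_eq_imp_space_eq[OF assms(2)] by simp
  have cont: "continuous_on UNIV gs"
    by (rule convex_on_continuous[OF open_UNIV conj_convex[OF assms(4,7)]])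
  have gsm[measurable]: "gs \<in> borel_measurable borel"
    by (rule borel_measurable_continuous_onI[OF cont])
  have "(\<lambda>x. t * (\<mu> + gs (x / t - \<mu> + \<beta>))) \<in> borel_measurable borel"
    by measurable
  then have Lfm[measurable]: "Lf \<in> borel_measurable \<pi>"
    unfolding Lf_def assms(8) by (simp add: measurable_cong_sets[OF assms(2) refl])
  have ubAE: "AE x in \<pi>. Lf x \<le> u" using assms(9)[OF assms(12)] unfolding Lf_def u_def .
  have Ec: "E = -\<infinity> \<or> (integrable \<pi> Lf \<and> E = ereal (integral\<^sup>L \<pi> Lf))"
    unfolding E_def by (rule expect_cases[OF assms(1) Lfm ubAE])
  have Eu: "E \<le> ereal u"
  proof (cases "E = -\<infinity>")
    case False
    with Ec have int: "integrable \<pi> Lf" and Ee: "E = ereal (integral\<^sup>L \<pi> Lf)" by auto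
    have "integral\<^sup>L \<pi> Lf \<le> integral\<^sup>L \<pi> (\<lambda>x. u)"
      by (rule integral_mono_AE[OF int _ ubAE]) simp
    also have "\<dots> = u" by (simp add: prob_space)
    finally show ?thesis using Ee by simp
  qed simp
  have main: "measure ?P {xs \<in> space ?P. E \<le> ereal (Max ((\<lambda>k. Lf (xs k)) ` {..<N}) * (1 - \<epsilon>) + u * \<epsilon>)}
         \<ge> 1 - (1 - \<epsilon>) ^ N"
  proof (cases "N = 0 \<or> \<epsilon> = 0")
    case True
    then show ?thesis by auto
  next
    case False
    then have N0: "N > 0" and e0: "\<epsilon> > 0" using assms(10) by auto
    have pw: "0 \<le> (1 - \<epsilon>) ^ N" using assms(11) by simp
    show ?thesis
    proof (cases "E = -\<infinity> \<or> \<epsilon> = 1")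
      case True
      have "{xs \<in> space ?P. E \<le> ereal (Max ((\<lambda>k. Lf (xs k)) ` {..<N}) * (1 - \<epsilon>) + u * \<epsilon>)} = space ?P"
      proof -
        have "E \<le> ereal (M * (1 - \<epsilon>) + u * \<epsilon>)" for M
        proof (cases "E = -\<infinity>")
          case False
          then have "\<epsilon> = 1" using True by blast
          then show ?thesis using Eu by simp
        qed simp
        then show ?thesis by blast
      qed
      then show ?thesis using pw P.prob_space by simp
    next
      case False
      then have e1: "\<epsilon> < 1" using assms(11) by auto
      from False Ec have int: "integrable \<pi> Lf" and Ee: "E = ereal (integral\<^sup>L \<pi> Lf)" by auto
      define e where "e = integral\<^sup>L \<pi> Lf"
      have eu: "e \<le> u" using Eu Ee e_def by simp
      define c where "c = (e - u * \<epsilon>) / (1 - \<epsilon>)"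
      have ce: "e = c * (1 - \<epsilon>) + u * \<epsilon>" using e1 unfolding c_def by (simp add: field_simps)
      have cdiv: "c \<le> M \<longleftrightarrow> e - u * \<epsilon> \<le> M * (1 - \<epsilon>)" for M
        unfolding c_def using e1 by (simp add: pos_divide_le_eq)
      have dist: "M * (1 - \<epsilon>) = M - M * \<epsilon>" for M by (simp add: right_diff_distrib)
      have cu: "c \<le> u" using cdiv[of u] dist[of u] eu by linarith
      define A where "A = {x. Lf x < c}"
      have "{x \<in> space \<pi>. Lf x < c} \<in> sets \<pi>" by measurable
      then have Am: "A \<in> sets \<pi>" unfolding A_def using spi by simp
      define q where "q = prob A"
      have q0: "0 \<le> q" unfolding q_def by simp
      have qle: "q \<le> 1 - \<epsilon>"
      proof (rule ccontr)
        assume "\<not> q \<le> 1 - \<epsilon>"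
        then have qg: "q > 1 - \<epsilon>" by simp
        define B where "B = space \<pi> - A"
        have Bm: "B \<in> sets \<pi>" unfolding B_def using Am by auto
        have qB: "prob B = 1 - q" unfolding B_def q_def using Am by (rule prob_compl)
        have iA: "integrable \<pi> (\<lambda>x. Lf x * indicator A x)"
          using Am int by (rule integrable_real_mult_indicator)
        have iB: "integrable \<pi> (\<lambda>x. Lf x * indicator B x)"
          using Bm int by (rule integrable_real_mult_indicator)
        have "e = integral\<^sup>L \<pi> (\<lambda>x. Lf x * indicator A x + Lf x * indicator B x)"
          unfolding e_def by (rule Bochner_Integration.integral_cong) (auto simp: B_def spi indicator_def)
        also have "\<dots> = integral\<^sup>L \<pi> (\<lambda>x. Lf x * indicator A x) + integral\<^sup>L \<pi> (\<lambda>x. Lf x * indicator B x)"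
          by (rule Bochner_Integration.integral_add[OF iA iB])
        finally have esplit: "e = integral\<^sup>L \<pi> (\<lambda>x. Lf x * indicator A x) + integral\<^sup>L \<pi> (\<lambda>x. Lf x * indicator B x)" .
        have "integral\<^sup>L \<pi> (\<lambda>x. Lf x * indicator B x) \<le> integral\<^sup>L \<pi> (\<lambda>x. u * indicator B x)"
          by (rule integral_mono_AE[OF iB integrable_real_mult_indicator[OF Bm finite_measure.integrable_const[OF finite_measure_axioms]]])
             (use ubAE in \<open>auto simp: indicator_def elim!: eventually_mono\<close>)
        also have "\<dots> = u * (1 - q)" using Bm qB by simp
        finally have IB: "integral\<^sup>L \<pi> (\<lambda>x. Lf x * indicator B x) \<le> u * (1 - q)" .
        define h where "h = (\<lambda>x. (c - Lf x) * indicator A x :: real)"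
        have ih: "integrable \<pi> h" unfolding h_def
          by (rule integrable_real_mult_indicator[OF Am Bochner_Integration.integrable_diff[OF finite_measure.integrable_const[OF finite_measure_axioms] int]])
        have hpos: "\<And>x. 0 \<le> h x" unfolding h_def A_def by (auto simp: indicator_def)
        have hint: "integral\<^sup>L \<pi> h = c * q - integral\<^sup>L \<pi> (\<lambda>x. Lf x * indicator A x)"
        proof -
          have "integral\<^sup>L \<pi> h = integral\<^sup>L \<pi> (\<lambda>x. c * indicator A x - Lf x * indicator A x)"
            unfolding h_def by (rule Bochner_Integration.integral_cong) (simp_all add: left_diff_distrib)
          also have "\<dots> = integral\<^sup>L \<pi> (\<lambda>x. c * indicator A x) - integral\<^sup>L \<pi> (\<lambda>x. Lf x * indicator A x)"
            by (rule Bochner_Integration.integral_diff[OF integrable_real_mult_indicator[OF Am finite_measure.integrable_const[OF finite_measure_axioms]] iA])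
          finally show ?thesis using Am unfolding q_def by simp
        qed
        have "integral\<^sup>L \<pi> h \<noteq> 0"
        proof
          assume "integral\<^sup>L \<pi> h = 0"
          then have "AE x in \<pi>. h x = 0"
            using integral_nonneg_eq_0_iff_AE[OF ih] hpos by simp
          then have "AE x in \<pi>. x \<notin> A"
          proof (rule eventually_mono)
            fix x assume "h x = 0"
            then show "x \<notin> A" unfolding h_def A_def indicator_def by (auto split: if_splits)
          qed
          then have "emeasure \<pi> A = 0"
          proof -
            have "{x \<in> space \<pi>. \<not> x \<notin> A} = A" using spi by simp
            from AE_iff_measurable[OF Am this] show ?thesis using \<open>AE x in \<pi>. x \<notin> A\<close> by simp
          qed
          then have "q = 0" unfolding q_def by (simp add: measure_def)
          then show False using qg e1 by simp
        qed
        moreover have "integral\<^sup>L \<pi> h \<ge> 0" using hpos by (simp add: Bochner_Integration.integral_nonneg)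
        ultimately have IA: "integral\<^sup>L \<pi> (\<lambda>x. Lf x * indicator A x) < c * q" using hint by simp
        have key: "(u - c) * (1 - q - \<epsilon>) = c * q + u * (1 - q) - (c * (1 - \<epsilon>) + u * \<epsilon>)"
          by (simp add: algebra_simps)
        have "(u - c) * (1 - q - \<epsilon>) \<le> 0"
        proof (rule mult_nonneg_nonpos)
          show "0 \<le> u - c" using cu by linarith
          show "1 - q - \<epsilon> \<le> 0" using qg by linarith
        qed
        then show False using key IA IB esplit ce by linarith
      qed
      have spP: "space ?P = PiE {..<N} (\<lambda>_. UNIV)" by (simp add: space_PiM spi)
      have PAm: "PiE {..<N} (\<lambda>_. A) \<in> sets ?P"
        using Am by (intro sets_PiM_I_finite) auto
      have seteq: "{xs \<in> space ?P. E \<le> ereal (Max ((\<lambda>k. Lf (xs k)) ` {..<N}) * (1 - \<epsilon>) + u * \<epsilon>)}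
          = space ?P - PiE {..<N} (\<lambda>_. A)"
      proof -
        have "E \<le> ereal (Max ((\<lambda>k. Lf (xs k)) ` {..<N}) * (1 - \<epsilon>) + u * \<epsilon>) \<longleftrightarrow> (\<exists>k<N. c \<le> Lf (xs k))" for xs
        proof -
          have "E \<le> ereal (Max ((\<lambda>k. Lf (xs k)) ` {..<N}) * (1 - \<epsilon>) + u * \<epsilon>) \<longleftrightarrow>
              c \<le> Max ((\<lambda>k. Lf (xs k)) ` {..<N})"
            using Ee cdiv[of "Max ((\<lambda>k. Lf (xs k)) ` {..<N})"] unfolding e_def[symmetric] by (simp add: diff_le_eq)
          also have "\<dots> \<longleftrightarrow> (\<exists>k<N. c \<le> Lf (xs k))"
            using N0 by (subst Max_ge_iff) auto
          finally show ?thesis .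
        qed
        note iff = this
        show ?thesis
        proof (intro set_eqI iffI)
          fix xs assume xs: "xs \<in> {xs \<in> space ?P. E \<le> ereal (Max ((\<lambda>k. Lf (xs k)) ` {..<N}) * (1 - \<epsilon>) + u * \<epsilon>)}"
          then obtain k where "k < N" "c \<le> Lf (xs k)" using iff by blast
          then have "xs \<notin> PiE {..<N} (\<lambda>_. A)"
          proof (intro notI)
            assume "xs \<in> PiE {..<N} (\<lambda>_. A)"
            then have "xs k \<in> A" using \<open>k < N\<close> by (simp add: PiE_iff)
            then show False using \<open>c \<le> Lf (xs k)\<close> unfolding A_def by simp
          qed
          then show "xs \<in> space ?P - PiE {..<N} (\<lambda>_. A)" using xs by blast
        next
          fix xs assume xs: "xs \<in> space ?P - PiE {..<N} (\<lambda>_. A)"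
          then have "xs \<in> extensional {..<N}" unfolding spP by (simp add: PiE_iff)
          with xs have "\<not> (\<forall>k<N. xs k \<in> A)" by (auto simp: PiE_iff)
          then obtain k where "k < N" "c \<le> Lf (xs k)" unfolding A_def by (auto simp: not_less)
          then show "xs \<in> {xs \<in> space ?P. E \<le> ereal (Max ((\<lambda>k. Lf (xs k)) ` {..<N}) * (1 - \<epsilon>) + u * \<epsilon>)}"
            using iff xs by blast
        qed
      qed
      interpret PS: product_sigma_finite "\<lambda>_::nat. \<pi>"
        by unfold_locales
      have "emeasure ?P (PiE {..<N} (\<lambda>_. A)) = (\<Prod>i\<in>{..<N}. emeasure \<pi> A)"
        using Am by (intro PS.emeasure_PiM) auto
      also have "\<dots> = ennreal (q ^ N)"
        using q0 by (simp add: emeasure_eq_measure q_def ennreal_power)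
      finally have "measure ?P (PiE {..<N} (\<lambda>_. A)) = q ^ N"
        using q0 by (simp add: measure_def)
      then have "measure ?P (space ?P - PiE {..<N} (\<lambda>_. A)) = 1 - q ^ N"
        using P.prob_compl[OF PAm] by simp
      moreover have "q ^ N \<le> (1 - \<epsilon>) ^ N" using qle q0 by (rule power_mono)
      ultimately show ?thesis unfolding seteq by simp
    qed
  qed
  then show ?thesis unfolding E_def Lf_def u_def .
qed

end
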